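(* Every Abel sequentially compact subset of $\mathbb{R}$ is ward compact.
   Context: A sequence $(p_n)_{n\ge0}$ is Abel convergent to $\ell$ if $\sum_{k=0}^{\infty}p_k x^k$ converges for every $0\le x<1$ and $\lim_{x\to 1^-}(1-x)\sum_{k=0}^{\infty}p_k x^k=\ell$. A subset $F\subseteq\mathbb{R}$ is Abel sequentially compact if every sequence of points of $F$ has a subsequence Abel convergent to a limit belonging to $F$. A sequence $(p_n)$ is quasi-Cauchy if $\lim_{n\to\infty}(p_{n+1}-p_n)=0$. A subset $E\subseteq\mathbb{R}$ is ward compact if every sequence of points of $E$ has a quasi-Cauchy subsequence. *)

theory Defs
  imports "HOL-Analysis.Analysis"
begin

definition abel_convergent :: "(nat \<Rightarrow> real) \<Rightarrow> real \<Rightarrow> bool" where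
  "abel_convergent p l \<longleftrightarrow>
     (\<forall>x. 0 \<le> x \<and> x < 1 \<longrightarrow> summable (\<lambda>k. p k * (x::real) ^ k)) \<and>
     ((\<lambda>x. (1 - x) * (\<Sum>k. p k * x ^ k)) \<longlongrightarrow> l) (at_left 1)"

definition abel_seq_compact :: "real set \<Rightarrow> bool" where
  "abel_seq_compact F \<longleftrightarrow>
     (\<forall>p::nat \<Rightarrow> real. (\<forall>n. p n \<in> F) \<longrightarrow>
        (\<exists>(r::nat \<Rightarrow> nat) l. strict_mono r \<and> l \<in> F \<and> abel_convergent (p \<circ> r) l))"

definition quasi_cauchy :: "(nat \<Rightarrow> real) \<Rightarrow> bool" where
  "quasi_cauchy p \<longleftrightarrow> (\<lambda>n. p (Suc n) - p n) \<longlonglongrightarrow> 0"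

definition ward_compact :: "real set \<Rightarrow> bool" where
  "ward_compact E \<longleftrightarrow>
     (\<forall>p. (\<forall>n. p n \<in> E) \<longrightarrow> (\<exists>r::nat \<Rightarrow> nat. strict_mono r \<and> quasi_cauchy (p \<circ> r)))"

end

theory Submission
  imports Defs
begin

lemma not_abel_big:
  fixes q :: "nat \<Rightarrow> real"
  assumes q: "\<And>k. q k \<ge> real k + 1"
  shows "\<not> abel_convergent q l"
proof
  assume a: "abel_convergent q l"
  have sm: "\<And>x. 0 \<le> x \<Longrightarrow> x < 1 \<Longrightarrow> summable (\<lambda>k. q k * x ^ k)"
    using a unfolding abel_convergent_def by blast
  have lim: "((\<lambda>x. (1 - x) * (\<Sum>k. q k * x ^ k)) \<longlongrightarrow> l) (at_left (1::real))"
    using a unfolding abel_convergent_def by blast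
  have low: "(1 - x) * (\<Sum>k. q k * x ^ k) \<ge> 1 / (1 - x)" if "0 \<le> x" "x < 1" for x :: real
  proof -
    have s: "(\<lambda>n. of_nat (Suc n) * x ^ n) sums (1 / (1 - x)^2)"
      by (rule geometric_deriv_sums) (use that in auto)
    have "1 / (1 - x)^2 \<le> (\<Sum>k. q k * x ^ k)"
    proof (rule sums_le[OF _ s summable_sums[OF sm[OF that]]])
      fix n
      have "of_nat (Suc n) \<le> q n" using q[of n] by simp
      thus "of_nat (Suc n) * x ^ n \<le> q n * x ^ n"
        using that by (intro mult_right_mono) auto
    qed
    then have "(1 - x) * (1 / (1 - x)^2) \<le> (1 - x) * (\<Sum>k. q k * x ^ k)"
      using that by (intro mult_left_mono) auto
    moreover have "(1 - x) * (1 / (1 - x)^2) = 1 / (1 - x)"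
    proof -
      have "1 - x \<noteq> 0" using that by simp
      thus ?thesis by (simp add: power2_eq_square)
    qed
    ultimately show ?thesis by simp
  qed
  have e1: "eventually (\<lambda>x. (1 - x) * (\<Sum>k. q k * x ^ k) < l + 1) (at_left (1::real))"
    using lim by (rule order_tendstoD) simp
  define d where "d = 1 / (\<bar>l\<bar> + 2)"
  have d: "0 < d" "d < 1" unfolding d_def by auto
  have e2: "eventually (\<lambda>x. 1 - d < x \<and> x < 1) (at_left (1::real))"
    using d by (auto simp: eventually_at_left_field intro!: exI[of _ "1 - d"])
  obtain x where x: "(1 - x) * (\<Sum>k. q k * x ^ k) < l + 1" "1 - d < x" "x < 1"
    using eventually_happens'[OF _ eventually_conj[OF e1 e2]] by auto
  have "0 \<le> x" using x d by linarith
  have "1 / (1 - x) > \<bar>l\<bar> + 2"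
  proof -
    have "1 - x < d" using x by linarith
    hence "1 / d < 1 / (1 - x)" using x by (intro divide_strict_left_mono) auto
    thus ?thesis by (simp add: d_def)
  qed
  with low[OF \<open>0 \<le> x\<close> x(3)] x(1) show False by linarith
qed

lemma abel_neg:
  assumes "abel_convergent p l"
  shows "abel_convergent (\<lambda>k. - p k) (- l)"
proof -
  have h1: "\<And>x. 0 \<le> x \<and> x < 1 \<longrightarrow> summable (\<lambda>k. p k * (x::real) ^ k)"
    using assms unfolding abel_convergent_def by blast
  have h2: "((\<lambda>x. (1 - x) * (\<Sum>k. p k * x ^ k)) \<longlongrightarrow> l) (at_left 1)"
    using assms unfolding abel_convergent_def by blast
  show ?thesis unfolding abel_convergent_def
  proof (intro conjI allI impI)
    fix x :: real assume "0 \<le> x \<and> x < 1"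
    thus "summable (\<lambda>k. (- p k) * x ^ k)" using h1[of x] by (simp add: summable_minus)
  next
    have ev: "\<forall>\<^sub>F x in at_left (1::real). (1 - x) * (\<Sum>k. - p k * x ^ k) = - ((1 - x) * (\<Sum>k. p k * x ^ k))"
    proof -
      have "\<forall>\<^sub>F x in at_left (1::real). 0 < x \<and> x < 1"
        by (auto simp: eventually_at_left_field intro!: exI[of _ 0])
      thus ?thesis
      proof (rule eventually_mono)
        fix x :: real assume "0 < x \<and> x < 1"
        hence "summable (\<lambda>k. p k * x ^ k)" using h1[of x] by simp
        thus "(1 - x) * (\<Sum>k. - p k * x ^ k) = - ((1 - x) * (\<Sum>k. p k * x ^ k))"
          by (simp add: suminf_minus)
      qed
    qed
    show "((\<lambda>x. (1 - x) * (\<Sum>k. - p k * x ^ k)) \<longlongrightarrow> - l) (at_left 1)"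
      by (subst tendsto_cong[OF ev]) (rule tendsto_minus[OF h2])
  qed
qed

lemma bounded_F:
  assumes "abel_seq_compact F"
  shows "bounded F"
proof (rule ccontr)
  assume nb: "\<not> bounded F"
  have "(\<forall>n::nat. \<exists>x\<in>F. x \<ge> real n + 1) \<or> (\<forall>n::nat. \<exists>x\<in>F. x \<le> - (real n + 1))"
  proof (rule ccontr)
    assume "\<not> ?thesis"
    then obtain n m :: nat where n: "\<forall>x\<in>F. x < real n + 1" and m: "\<forall>x\<in>F. x > - (real m + 1)"
      by (auto simp: not_le)
    have "\<forall>x\<in>F. \<bar>x\<bar> \<le> real n + real m + 2" using n m by force
    hence "bounded F" unfolding bounded_iff by (metis real_norm_def)
    with nb show False by simp
  qed
  then show False
  proof
    assume h: "\<forall>n::nat. \<exists>x\<in>F. x \<ge> real n + 1"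
    then obtain p where p: "\<And>n. p n \<in> F \<and> p n \<ge> real n + 1" by metis
    then obtain r l where r: "strict_mono r" "abel_convergent (p \<circ> r) l"
      using assms unfolding abel_seq_compact_def by blast
    have "\<And>k. (p \<circ> r) k \<ge> real k + 1"
      using p seq_suble[OF r(1)] by (smt (verit) comp_apply of_nat_le_iff)
    with not_abel_big r(2) show False by blast
  next
    assume h: "\<forall>n::nat. \<exists>x\<in>F. x \<le> - (real n + 1)"
    then obtain p where p: "\<And>n. p n \<in> F \<and> p n \<le> - (real n + 1)" by metis
    then obtain r l where r: "strict_mono r" "abel_convergent (p \<circ> r) l"
      using assms unfolding abel_seq_compact_def by blast
    have "\<And>k. (\<lambda>k. - (p \<circ> r) k) k \<ge> real k + 1"
      using p seq_suble[OF r(1)] by (smt (verit) comp_apply of_nat_le_iff)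
    with not_abel_big[of "\<lambda>k. - (p \<circ> r) k"] abel_neg[OF r(2)] show False by blast
  qed
qed

theorem corollary19:
  fixes F :: "real set"
  assumes "abel_seq_compact F"
  shows "ward_compact F"
  unfolding ward_compact_def
proof (intro allI impI)
  fix p :: "nat \<Rightarrow> real" assume p: "\<forall>n. p n \<in> F"
  have "bounded (range p)" using bounded_F[OF assms] p by (meson bounded_subset image_subsetI)
  then obtain l r where r: "strict_mono (r::nat\<Rightarrow>nat)" "(p \<circ> r) \<longlonglongrightarrow> l"
    using bounded_imp_convergent_subsequence by blast
  have "(\<lambda>n. (p \<circ> r) (Suc n) - (p \<circ> r) n) \<longlonglongrightarrow> l - l"
    by (intro tendsto_diff LIMSEQ_Suc r(2))
  thus "\<exists>r. strict_mono r \<and> quasi_cauchy (p \<circ> r)"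
    using r(1) unfolding quasi_cauchy_def by auto
qed

end
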